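(* Let $d\in[n]$, let every $v_j$ be $d$-self-bounding, fix $\mathbf s$, rename bidders so that $v_1(\mathbf s)\ge\cdots\ge v_n(\mathbf s)>0$, and let $k=\max\{i:v_i(\mathbf s)>v_1(\mathbf s)/2\}$. For each $i\in[n]$ define $$A_i=\frac{\log_2^\dagger\big(v_1(\mathbf s)/\underline v_1^{(i)}(\mathbf s)\big)}{k+1}+\sum_{j=1}^k\frac{\log_2^\dagger\big(v_j(\mathbf s)/\underline v_j^{(i)}(\mathbf s)\big)}{j(j+1)}.$$ Then $\sum_{i=1}^nA_i\le 2d$.
   Context: Signals $s_i\in S_i\subseteq\mathbb R$, $\mathbf S=S_1\times\cdots\times S_n$, valuations $v_j:\mathbf S\to\mathbb R_{>0}$. Lower estimates: $\underline v_j^{(i)}(\mathbf s)=\inf_{o_i\in S_i}v_j(o_i,\mathbf s_{-i})$. $v$ is $d$-self-bounding if $\sum_{i=1}^n(v(\mathbf s)-\inf_{o_i}v(o_i,\mathbf s_{-i}))\le d\,v(\mathbf s)$ for all $\mathbf s$. $\log_2^\dagger(\alpha)=\max(0,\min(1,\log_2\alpha))$, with $a/0=\infty$, $\log_2\infty=\infty$. *)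

theory Defs
  imports "HOL-Analysis.Analysis" "HOL-Library.FuncSet"
begin

definition profiles :: "nat \<Rightarrow> (nat \<Rightarrow> real set) \<Rightarrow> (nat \<Rightarrow> real) set" where
  "profiles n S = PiE {1..n} S"

definition lower_est :: "(nat \<Rightarrow> real set) \<Rightarrow> ((nat \<Rightarrow> real) \<Rightarrow> real) \<Rightarrow> nat \<Rightarrow> (nat \<Rightarrow> real) \<Rightarrow> real" where
  "lower_est S f i s = Inf ((\<lambda>x. f (s(i := x))) ` S i)"

definition self_bounding :: "nat \<Rightarrow> (nat \<Rightarrow> real set) \<Rightarrow> real \<Rightarrow> ((nat \<Rightarrow> real) \<Rightarrow> real) \<Rightarrow> bool" where
  "self_bounding n S d f \<longleftrightarrow>
     (\<forall>s\<in>profiles n S. (\<Sum>i=1..n. f s - lower_est S f i s) \<le> d * f s)"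

definition ediv :: "real \<Rightarrow> real \<Rightarrow> ereal" where
  "ediv a b = (if b = 0 then \<infinity> else ereal (a / b))"

definition log2dag :: "ereal \<Rightarrow> real" where
  "log2dag x = (if x = \<infinity> then 1 else if x = -\<infinity> then 0
                else max 0 (min 1 (log 2 (real_of_ereal x))))"

end

theory Submission
  imports Defs
begin
lemma ln_key:
  fixes x :: real assumes "1 \<le> x" "x \<le> 2"
  shows "ln x \<le> 2 * ln 2 * (1 - 1/x)"
proof -
  define c where "c = 2 * ln (2::real)"
  define h where "h = (\<lambda>t::real. ln t - c * (1 - 1/t))"
  have D: "DERIV h t :> (1/t - c/t^2)" if "t > 0" for t
    unfolding h_def using that
    by (auto intro!: derivative_eq_intros simp: power2_eq_square field_simps)
  have h1: "h 1 = 0" by (simp add: h_def)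
  have h2: "h 2 = 0" by (simp add: h_def c_def)
  have "h x \<le> 0"
  proof (cases "x \<le> c")
    case True
    have "h x \<le> h 1"
    proof (rule DERIV_nonpos_imp_nonincreasing[OF assms(1)])
      fix t assume t: "1 \<le> t" "t \<le> x"
      have "1/t - c/t^2 = (t - c)/t^2" using t by (simp add: field_simps power2_eq_square)
      also have "\<dots> \<le> 0" using t True by (intro divide_nonpos_nonneg) auto
      finally show "\<exists>y. DERIV h t :> y \<and> y \<le> 0" using D[of t] t by auto
    qed
    thus ?thesis using h1 by simp
  next
    case False
    have "h x \<le> h 2"
    proof (rule DERIV_nonneg_imp_nondecreasing[OF assms(2)])
      fix t assume t: "x \<le> t" "t \<le> 2"
      have "1/t - c/t^2 = (t - c)/t^2" using t assms by (simp add: field_simps power2_eq_square)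
      also have "\<dots> \<ge> 0" using t False by (intro divide_nonneg_nonneg) auto
      finally show "\<exists>y. DERIV h t :> y \<and> y \<ge> 0" using D[of t] t assms by auto
    qed
    thus ?thesis using h2 by simp
  qed
  thus ?thesis by (simp add: h_def c_def)
qed

lemma log_key:
  fixes V L :: real assumes "0 < L" "L \<le> V"
  shows "max 0 (min 1 (log 2 (V/L))) \<le> 2 * ((V - L)/V)"
proof -
  define x where "x = V/L"
  have x1: "x \<ge> 1" using assms by (simp add: x_def)
  have eq: "(V - L)/V = 1 - 1/x" using assms by (simp add: x_def field_simps)
  show ?thesis
  proof (cases "x \<le> 2")
    case True
    have "ln x \<le> 2 * ln 2 * (1 - 1/x)" using ln_key x1 True by blast
    hence "log 2 x \<le> 2 * (1 - 1/x)" by (simp add: log_def field_simps)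
    moreover have "0 \<le> 1 - 1/x" using x1 by simp
    ultimately show ?thesis unfolding eq x_def[symmetric] by (auto simp: max_def min_def)
  next
    case False
    have "1/x \<le> 1/2" using False by (simp add: field_simps)
    thus ?thesis unfolding eq x_def[symmetric] by (auto simp: max_def min_def)
  qed
qed

lemma term_bound:
  fixes V L :: real assumes "0 \<le> L" "L \<le> V" "0 < V"
  shows "log2dag (ediv V L) \<le> 2 * ((V - L)/V)"
proof (cases "L = 0")
  case True thus ?thesis using assms by (simp add: ediv_def log2dag_def)
next
  case False
  hence "0 < L" using assms by simp
  thus ?thesis using log_key[of L V] assms by (simp add: ediv_def log2dag_def)
qed

lemma tele_step:
  fixes x :: real assumes "0 \<le> x"
  shows "1 - 1 / (x + 1) + 1 / ((x + 1) * (x + 2)) = 1 - 1 / (x + 2)"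
proof -
  have a: "x + 1 \<noteq> 0" "x + 2 \<noteq> 0" using assms by auto
  have e: "1 / (x + 1) = (x + 2) / ((x + 1) * (x + 2))" using a by simp
  have "1 / (x + 1) - 1 / ((x + 1) * (x + 2)) = ((x + 2) - 1) / ((x + 1) * (x + 2))"
    unfolding e by (rule diff_divide_distrib[symmetric])
  also have "(x + 2) - 1 = x + 1" by simp
  also have "(x + 1) / ((x + 1) * (x + 2)) = 1 / (x + 2)" using a by simp
  finally show ?thesis by simp
qed

lemma telescope: "(\<Sum>j=1..k. 1 / real (j * (j + 1))) = 1 - 1 / real (k + 1)"
proof (induction k)
  case 0 thus ?case by simp
next
  case (Suc k)
  have "(\<Sum>j=1..Suc k. 1 / real (j * (j + 1))) = (\<Sum>j=1..k. 1 / real (j * (j + 1))) + 1 / real (Suc k * (Suc k + 1))"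
    by (simp add: algebra_simps)
  also have "\<dots> = (1 - 1 / real (k + 1)) + 1 / real (Suc k * (Suc k + 1))"
    by (simp only: Suc.IH)
  also have "real (Suc k * (Suc k + 1)) = (real k + 1) * (real k + 2)" by (simp add: algebra_simps)
  also have "real (k + 1) = real k + 1" by simp
  also have "1 - 1 / (real k + 1) + 1 / ((real k + 1) * (real k + 2)) = 1 - 1 / (real k + 2)"
    using tele_step[of "real k"] by simp
  also have "real k + 2 = real (Suc k + 1)" by simp
  finally show ?case .
qed

theorem mainTheorem11:
  fixes n d :: nat and S :: "nat \<Rightarrow> real set"
    and v :: "nat \<Rightarrow> (nat \<Rightarrow> real) \<Rightarrow> real" and s :: "nat \<Rightarrow> real"
  assumes d: "d \<in> {1..n}"
    and pos: "\<forall>j\<in>{1..n}. \<forall>t\<in>profiles n S. v j t > 0"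
    and sb: "\<forall>j\<in>{1..n}. self_bounding n S (real d) (v j)"
    and s: "s \<in> profiles n S"
    and sorted: "\<forall>j\<in>{1..n}. \<forall>j'\<in>{1..n}. j \<le> j' \<longrightarrow> v j' s \<le> v j s"
  shows "let k = Max {i\<in>{1..n}. v i s > v 1 s / 2};
             A = (\<lambda>i. log2dag (ediv (v 1 s) (lower_est S (v 1) i s)) / real (k + 1)
                      + (\<Sum>j=1..k. log2dag (ediv (v j s) (lower_est S (v j) i s)) / real (j * (j + 1))))
         in (\<Sum>i=1..n. A i) \<le> 2 * real d"
proof -
  define t where "t = (\<lambda>j i. log2dag (ediv (v j s) (lower_est S (v j) i s)))"
  have bnds: "0 \<le> lower_est S (v j) i s \<and> lower_est S (v j) i s \<le> v j s"
    if j: "j \<in> {1..n}" and i: "i \<in> {1..n}" for i j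
  proof -
    have mem: "s(i := x) \<in> profiles n S" if "x \<in> S i" for x
      using s i that unfolding profiles_def by (auto simp: PiE_def Pi_def extensional_def)
    have si: "s i \<in> S i" using s i unfolding profiles_def by (auto simp: PiE_def Pi_def)
    let ?X = "(\<lambda>x. v j (s(i := x))) ` S i"
    have ne: "?X \<noteq> {}" using si by auto
    have gt: "\<forall>y\<in>?X. 0 < y" using mem pos j by auto
    have bdd: "bdd_below ?X" using gt by (auto intro!: bdd_belowI[of _ 0] less_imp_le)
    have inX: "v j s \<in> ?X" using si by (auto intro!: image_eqI[where x="s i"])
    have "Inf ?X \<le> v j s" using inX bdd by (intro cInf_lower) auto
    moreover have "0 \<le> Inf ?X" using ne gt by (intro cInf_greatest) (auto intro: less_imp_le)
    ultimately show ?thesis unfolding lower_est_def by simp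
  qed
  have colbound: "(\<Sum>i=1..n. t j i) \<le> 2 * real d" if j: "j \<in> {1..n}" for j
  proof -
    have V: "0 < v j s" using pos j s by auto
    have "(\<Sum>i=1..n. t j i) \<le> (\<Sum>i=1..n. 2 * ((v j s - lower_est S (v j) i s) / v j s))"
      unfolding t_def using bnds[OF j] V by (intro sum_mono term_bound) auto
    also have "\<dots> = 2 / v j s * (\<Sum>i=1..n. v j s - lower_est S (v j) i s)"
      by (simp add: sum_distrib_left sum_divide_distrib)
    also have "\<dots> \<le> 2 / v j s * (real d * v j s)"
      using sb j s V unfolding self_bounding_def by (intro mult_left_mono) auto
    also have "\<dots> = 2 * real d" using V by simp
    finally show ?thesis .
  qed
  define k where "k = Max {i\<in>{1..n}. v i s > v 1 s / 2}"
  have n1: "1 \<in> {1..n}" using d by auto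
  have "1 \<in> {i\<in>{1..n}. v i s > v 1 s / 2}" using n1 pos s by auto
  hence kn: "k \<le> n" unfolding k_def by (subst Max_le_iff) auto
  have "(\<Sum>i=1..n. t 1 i / real (k + 1) + (\<Sum>j=1..k. t j i / real (j * (j + 1))))
      = (\<Sum>i=1..n. t 1 i) / real (k + 1) + (\<Sum>j=1..k. (\<Sum>i=1..n. t j i) / real (j * (j + 1)))"
    by (simp add: sum.distrib sum_divide_distrib) (rule sum.swap)
  also have "\<dots> \<le> 2 * real d / real (k + 1) + (\<Sum>j=1..k. 2 * real d / real (j * (j + 1)))"
    using colbound n1 kn
    by (intro add_mono divide_right_mono sum_mono) auto
  also have "\<dots> = 2 * real d * (1 / real (k + 1) + (\<Sum>j=1..k. 1 / real (j * (j + 1))))"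
    by (simp add: sum_distrib_left field_simps)
  also have "\<dots> = 2 * real d" by (subst telescope) simp
  finally show ?thesis unfolding Let_def k_def[symmetric] t_def .
qed

end
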